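(* Let $G=(V,E)$ be a finite undirected graph with $n=|V|$ nodes, adjacency matrix $A$, diagonal degree matrix $D$, normalized adjacency $\tilde A=D^{-1/2}(A+I)D^{-1/2}$ and normalized Laplacian $L=I-\tilde A$, with orthonormal eigendecomposition $L=\Phi\Lambda\Phi^\top$, eigenvalues $\lambda_1\le\lambda_2\le\dots\le\lambda_n$ and corresponding orthonormal eigenvectors $\phi_1,\dots,\phi_n$. Fix $T\ge 1$, $1\le K\le n-1$, a node feature matrix $X\in\mathbb R^{n\times d}$, and let $P=[\phi_2,\dots,\phi_{K+1}]\in\mathbb R^{n\times K}$. Let \[ \mathcal H^{(T)}_{\mathrm{LapPE}}=\{\tilde A^{T}[X\,|\,P]\,w:\ w\in\mathbb R^{d+K}\} \] be the class of outputs of a $T$-layer linearized GCN whose input features are augmented with $P$. If $(1-\lambda_k)^T\neq 0$ for all $k=2,\dots,K+1$, then for every label signal $y\in\mathbb R^n$, \[ \min_{\hat y\in\mathcal H^{(T)}_{\mathrm{LapPE}}}\|y-\hat y\|_2\;\le\;\bigl\|y-\Pi_{\mathrm{span}(\phi_2,\dots,\phi_{K+1})}\,y\bigr\|_2, \] where $\Pi_S$ denotes orthogonal projection onto the subspace $S$.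
   Context: A linearized $T$-layer GCN computes $\tilde A^T H^{(0)}W^{(1)}\cdots W^{(T)}$; with scalar output and sufficiently wide layers the product of weight matrices is an arbitrary vector $w$, giving the hypothesis class above. *)

theory Defs
  imports "HOL-Analysis.Analysis"
begin

text \<open>Graph on the finite vertex type 'n, given by a symmetric irreflexive edge relation E.\<close>

definition adj_matrix :: "('n::finite \<Rightarrow> 'n \<Rightarrow> bool) \<Rightarrow> real^'n^'n" where
  "adj_matrix E = (\<chi> i j. if E i j then 1 else 0)"

definition degree :: "('n::finite \<Rightarrow> 'n \<Rightarrow> bool) \<Rightarrow> 'n \<Rightarrow> real" where
  "degree E i = real (card {j. E i j})"

text \<open>D^(-1/2), with the convention inverse 0 = 0 for isolated vertices.\<close>
definition deg_inv_sqrt :: "('n::finite \<Rightarrow> 'n \<Rightarrow> bool) \<Rightarrow> real^'n^'n" where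
  "deg_inv_sqrt E = (\<chi> i j. if i = j then inverse (sqrt (degree E i)) else 0)"

definition norm_adj :: "('n::finite \<Rightarrow> 'n \<Rightarrow> bool) \<Rightarrow> real^'n^'n" where
  "norm_adj E = deg_inv_sqrt E ** (adj_matrix E + mat 1) ** deg_inv_sqrt E"

definition norm_lap :: "('n::finite \<Rightarrow> 'n \<Rightarrow> bool) \<Rightarrow> real^'n^'n" where
  "norm_lap E = mat 1 - norm_adj E"

fun mat_pow :: "real^'n::finite^'n \<Rightarrow> nat \<Rightarrow> real^'n^'n" where
  "mat_pow M 0 = mat 1"
| "mat_pow M (Suc k) = M ** mat_pow M k"

definition orth_proj :: "'a::real_inner set \<Rightarrow> 'a \<Rightarrow> 'a" where
  "orth_proj S y = (THE p. p \<in> S \<and> (\<forall>s\<in>S. inner (y - p) s = 0))"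

text \<open>Hypothesis class of the T-layer linearized GCN with input [X | P], where X has d
  columns X 0, ..., X (d-1) and P = [phi 2, ..., phi (K+1)].\<close>
definition H_LapPE ::
  "real^'n::finite^'n \<Rightarrow> nat \<Rightarrow> nat \<Rightarrow> (nat \<Rightarrow> real^'n) \<Rightarrow> nat \<Rightarrow> (nat \<Rightarrow> real^'n) \<Rightarrow> (real^'n) set" where
  "H_LapPE At T d X K phi =
     {mat_pow At T *v ((\<Sum>j<d. a j *\<^sub>R X j) + (\<Sum>k\<in>{2..K+1}. c k *\<^sub>R phi k)) | a c. True}"

end

theory Submission
  imports Defs
begin

lemma orth_proj_eq:
  fixes S :: "'a::real_inner set"
  assumes S: "subspace S" and p: "p \<in> S" and o: "\<forall>s\<in>S. inner (y - p) s = 0"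
  shows "orth_proj S y = p"
  unfolding orth_proj_def
proof (rule the_equality)
  show "p \<in> S \<and> (\<forall>s\<in>S. inner (y - p) s = 0)" using p o by blast
next
  fix q assume q: "q \<in> S \<and> (\<forall>s\<in>S. inner (y - q) s = 0)"
  have d: "q - p \<in> S" using q p S by (simp add: subspace_diff)
  have "inner (y - p) (q - p) = 0" "inner (y - q) (q - p) = 0" using o q d by auto
  then have "inner (q - p) (q - p) = 0" by (simp add: inner_diff_left inner_diff_right)
  then show "q = p" by simp
qed

lemma mat_pow_eig:
  assumes "M *v v = m *\<^sub>R v"
  shows "mat_pow M t *v v = (m ^ t) *\<^sub>R v"
proof (induction t)
  case 0 then show ?case by simp
next
  case (Suc t)
  have "mat_pow M (Suc t) *v v = M *v (mat_pow M t *v v)"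
    by (simp add: matrix_vector_mul_assoc)
  also have "\<dots> = (m ^ Suc t) *\<^sub>R v" using Suc assms
    by (simp add: matrix_vector_mult_scaleR)
  finally show ?case .
qed

theorem proposition3p3:
  fixes E :: "'n::finite \<Rightarrow> 'n \<Rightarrow> bool"
    and lam :: "nat \<Rightarrow> real"
    and phi :: "nat \<Rightarrow> real^'n"
    and T d K :: nat
    and X :: "nat \<Rightarrow> real^'n"
    and y :: "real^'n"
  assumes sym: "\<And>i j. E i j \<longleftrightarrow> E j i"
    and irrefl: "\<And>i. \<not> E i i"
    and orthonormal: "\<And>i j. i \<in> {1..CARD('n)} \<Longrightarrow> j \<in> {1..CARD('n)} \<Longrightarrow>
                         inner (phi i) (phi j) = (if i = j then 1 else 0)"
    and eigen: "\<And>k. k \<in> {1..CARD('n)} \<Longrightarrow> norm_lap E *v phi k = lam k *\<^sub>R phi k"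
    and sorted: "\<And>i j. 1 \<le> i \<Longrightarrow> i \<le> j \<Longrightarrow> j \<le> CARD('n) \<Longrightarrow> lam i \<le> lam j"
    and T: "T \<ge> 1"
    and K: "1 \<le> K" "K \<le> CARD('n) - 1"
    and nonzero: "\<And>k. k \<in> {2..K+1} \<Longrightarrow> (1 - lam k) ^ T \<noteq> 0"
  shows "\<exists>yh \<in> H_LapPE (norm_adj E) T d X K phi.
           (\<forall>z \<in> H_LapPE (norm_adj E) T d X K phi. norm (y - yh) \<le> norm (y - z)) \<and>
           norm (y - yh) \<le> norm (y - orth_proj (span (phi ` {2..K+1})) y)"
proof -
  define H where "H = H_LapPE (norm_adj E) T d X K phi"
  define M where "M = mat_pow (norm_adj E) T"
  define f where "f = (\<lambda>(a::nat\<Rightarrow>real) (c::nat\<Rightarrow>real).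
      M *v ((\<Sum>j<d. a j *\<^sub>R X j) + (\<Sum>k\<in>{2..K+1}. c k *\<^sub>R phi k)))"
  have Hf: "H = {f a c | a c. True}" unfolding H_def H_LapPE_def f_def M_def by simp
  have fadd: "f a c + f a' c' = f (\<lambda>j. a j + a' j) (\<lambda>k. c k + c' k)" for a c a' c'
  proof -
    have "(\<Sum>j<d. (a j + a' j) *\<^sub>R X j) = (\<Sum>j<d. a j *\<^sub>R X j) + (\<Sum>j<d. a' j *\<^sub>R X j)"
      by (simp add: scaleR_add_left sum.distrib)
    moreover have "(\<Sum>k\<in>{2..K+1}. (c k + c' k) *\<^sub>R phi k) = (\<Sum>k\<in>{2..K+1}. c k *\<^sub>R phi k) + (\<Sum>k\<in>{2..K+1}. c' k *\<^sub>R phi k)"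
      by (simp add: scaleR_add_left sum.distrib)
    ultimately show ?thesis unfolding f_def
      by (simp add: matrix_vector_right_distrib[symmetric] add_ac)
  qed
  have fscale: "r *\<^sub>R f a c = f (\<lambda>j. r * a j) (\<lambda>k. r * c k)" for r a c
    unfolding f_def by (simp add: matrix_vector_mult_scaleR[symmetric] scaleR_add_right scaleR_sum_right)
  have f0: "f (\<lambda>_. 0) (\<lambda>_. 0) = 0" unfolding f_def by simp
  have subH: "subspace H"
    unfolding subspace_def Hf
  proof (intro conjI ballI allI)
    show "0 \<in> {f a c |a c. True}" using f0 by (metis (mono_tags, lifting) mem_Collect_eq)
  next
    fix x z assume "x \<in> {f a c |a c. True}" "z \<in> {f a c |a c. True}"
    then show "x + z \<in> {f a c |a c. True}" using fadd by blast
  next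
    fix r x assume "x \<in> {f a c |a c. True}"
    then show "r *\<^sub>R x \<in> {f a c |a c. True}" using fscale by blast
  qed
  have phiH: "phi k \<in> H" if k: "k \<in> {2..K+1}" for k
  proof -
    have k1: "k \<in> {1..CARD('n)}" using k K by auto
    have "norm_adj E *v phi k = (1 - lam k) *\<^sub>R phi k"
    proof -
      have na: "norm_adj E = mat 1 - norm_lap E" unfolding norm_lap_def by simp
      show ?thesis unfolding na matrix_vector_mult_diff_rdistrib eigen[OF k1]
        by (simp add: scaleR_diff_left)
    qed
    then have e: "M *v phi k = ((1 - lam k) ^ T) *\<^sub>R phi k"
      unfolding M_def by (rule mat_pow_eig)
    define mu where "mu = (1 - lam k) ^ T"
    have mu: "mu \<noteq> 0" using nonzero[OF k] mu_def by simp
    have "f (\<lambda>_. 0) (\<lambda>j. if j = k then inverse mu else 0) = M *v (inverse mu *\<^sub>R phi k)"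
    proof -
      have "(\<Sum>j\<in>{2..K+1}. (if j = k then inverse mu else 0) *\<^sub>R phi j)
          = (\<Sum>j\<in>{2..K+1}. if j = k then inverse mu *\<^sub>R phi j else 0)"
        by (rule sum.cong) auto
      also have "\<dots> = inverse mu *\<^sub>R phi k" using k by (subst sum.delta) simp_all
      finally show ?thesis unfolding f_def by simp
    qed
    also have "\<dots> = inverse mu *\<^sub>R (M *v phi k)" by (rule matrix_vector_mult_scaleR)
    also have "\<dots> = inverse mu *\<^sub>R (mu *\<^sub>R phi k)" by (simp only: e mu_def)
    also have "\<dots> = phi k" by (simp only: scaleR_scaleR left_inverse[OF mu] scaleR_one)
    finally have fe: "f (\<lambda>_. 0) (\<lambda>j. if j = k then inverse mu else 0) = phi k" .
    show ?thesis unfolding Hf mem_Collect_eq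
      by (intro exI conjI TrueI) (rule fe[symmetric])
  qed
  have spanH: "span (phi ` {2..K+1}) \<subseteq> H"
    by (rule span_minimal) (use phiH subH in auto)
  have closedH: "closed H" using subH by (rule closed_subspace)
  have neH: "H \<noteq> {}" using subH subspace_0 by blast
  obtain yh where yh: "yh \<in> H" "\<And>z. z \<in> H \<Longrightarrow> dist y yh \<le> dist y z"
    using distance_attains_inf[OF closedH neH, of y] by blast
  obtain p z where pz: "p \<in> span (phi ` {2..K+1})"
      "\<And>w. w \<in> span (phi ` {2..K+1}) \<Longrightarrow> orthogonal z w" "y = p + z"
    by (rule orthogonal_subspace_decomp_exists[of "phi ` {2..K+1}" y]) blast
  have "orth_proj (span (phi ` {2..K+1})) y = p"
  proof (rule orth_proj_eq)
    show "subspace (span (phi ` {2..K+1}))" by (rule subspace_span)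
    show "p \<in> span (phi ` {2..K+1})" by (rule pz(1))
    show "\<forall>s\<in>span (phi ` {2..K+1}). (y - p) \<bullet> s = 0"
      using pz(2,3) unfolding orthogonal_def by simp
  qed
  moreover have "p \<in> H" using pz(1) spanH by blast
  moreover have "\<forall>z \<in> H. norm (y - yh) \<le> norm (y - z)" using yh(2) by (simp add: dist_norm)
  ultimately have "\<exists>yh\<in>H. (\<forall>z \<in> H. norm (y - yh) \<le> norm (y - z)) \<and>
           norm (y - yh) \<le> norm (y - orth_proj (span (phi ` {2..K+1})) y)"
    using yh(1) by blast
  then show ?thesis unfolding H_def .
qed

end
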